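(* Let $n\ge2$ and let $F$ be an exponential functor with character polynomial $F(t)=\sum_{i=0}^d\mu_it^i\in\mathbb{Q}[t]$. Let $G(t)\in\mathbb{Q}[t]$ be any polynomial with $G'(t)=\frac{F(t)-F(0)}{t}$ and set $V(t_1,\dots,t_n)=\sum_{i=1}^nG(t_i)$. Regard symmetric polynomials as polynomials in the elementary symmetric polynomials $\bar c_1,\dots,\bar c_n$. Then for every $j\in\{0,\dots,n-2\}$, \[ c_{F,j}=(-1)^{n-j}\frac{\partial V}{\partial\bar c_{n-(j+1)}},\qquad\text{where } c_{F,j}=\frac{q_j}{\Delta}. \] In particular these derivatives generate the ideal $J_{F,\mathbb{Q}}=(c_{F,0},\dots,c_{F,n-2})$ in $(R_F(\mathbb{T})\otimes\mathbb{Q})^W$.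
   Context: An exponential functor is a continuous symmetric monoidal functor $F$ from finite-dimensional complex inner product spaces (unitary isomorphisms, $\oplus$) to finite-dimensional complex inner product super-vector spaces (grading-preserving unitaries, graded $\otimes$ with Koszul sign symmetry), preserving duals, such that the $S^1$-representation on $F(\mathbb{C})$ has only positive characters. Its character polynomial is $F(t)=\sum_k(\dim F(\mathbb{C})^{(k)}_{\mathrm{even}}-\dim F(\mathbb{C})^{(k)}_{\mathrm{odd}})t^k$. $\bar c_k=\sum_{i_1<\dots<i_k}t_{i_1}\cdots t_{i_k}$; $\Delta=\det(t_j^{n-k})_{k,j}$ is the Vandermonde determinant; $q_j(t_1,\dots,t_n)$ is the determinant of the $n\times n$ matrix whose first row is $(F(t_1)t_1^j,\dots,F(t_n)t_n^j)$ and whose remaining rows are $(t_1^{n-2},\dots,t_n^{n-2}),\dots,(t_1,\dots,t_n),(1,\dots,1)$; $q_j/\Delta$ is a symmetric polynomial. $R_F(\mathbb{T})=\mathbb{Z}[t_1,\dots,t_n]/(t_1\cdots t_n-1)[F(t_1)^{-1},\dots,F(t_n)^{-1}]$ with $W=S_n$ permuting the variables. *)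

theory Defs
  imports "HOL-Computational_Algebra.Polynomial" "HOL-Combinatorics.Permutations"
begin

text \<open>Points of Q^n are functions t :: nat => rat, coordinates t 1, ..., t n.\<close>

definition mdet :: "nat \<Rightarrow> (nat \<Rightarrow> nat \<Rightarrow> rat) \<Rightarrow> rat" where
  "mdet n A = (\<Sum>p | p permutes {1..n}. of_int (sign p) * (\<Prod>k=1..n. A k (p k)))"

definition vandermonde :: "nat \<Rightarrow> (nat \<Rightarrow> rat) \<Rightarrow> rat" where
  "vandermonde n t = mdet n (\<lambda>k l. t l ^ (n - k))"

definition qdet :: "rat poly \<Rightarrow> nat \<Rightarrow> nat \<Rightarrow> (nat \<Rightarrow> rat) \<Rightarrow> rat" where
  "qdet F n j t = mdet n (\<lambda>k l. if k = 1 then poly F (t l) * t l ^ j else t l ^ (n - k))"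

definition esym :: "nat \<Rightarrow> nat \<Rightarrow> (nat \<Rightarrow> rat) \<Rightarrow> rat" where
  "esym n k t = (\<Sum>S | S \<subseteq> {1..n} \<and> card S = k. \<Prod>i\<in>S. t i)"

text \<open>Multivariate polynomials over Q in the variables x_1, ..., x_n, given by their
  coefficient function on exponent vectors m :: nat => nat (finite support, exponents
  vanish outside 1..n).\<close>
definition is_mpoly :: "nat \<Rightarrow> ((nat \<Rightarrow> nat) \<Rightarrow> rat) \<Rightarrow> bool" where
  "is_mpoly n P \<longleftrightarrow> finite {m. P m \<noteq> 0} \<and> (\<forall>m. P m \<noteq> 0 \<longrightarrow> (\<forall>i. i \<notin> {1..n} \<longrightarrow> m i = 0))"

definition mpeval :: "nat \<Rightarrow> ((nat \<Rightarrow> nat) \<Rightarrow> rat) \<Rightarrow> (nat \<Rightarrow> rat) \<Rightarrow> rat" where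
  "mpeval n P x = (\<Sum>m | P m \<noteq> 0. P m * (\<Prod>i=1..n. x i ^ m i))"

definition mpderiv :: "nat \<Rightarrow> ((nat \<Rightarrow> nat) \<Rightarrow> rat) \<Rightarrow> ((nat \<Rightarrow> nat) \<Rightarrow> rat)" where
  "mpderiv k P = (\<lambda>m. of_nat (m k + 1) * P (m(k := m k + 1)))"

end

theory Submission
  imports Defs "Jordan_Normal_Form.Determinant"
begin

definition ES :: "nat set \<Rightarrow> nat \<Rightarrow> (nat \<Rightarrow> rat) \<Rightarrow> rat" where
  "ES J k t = (\<Sum>S | S \<subseteq> J \<and> card S = k. \<Prod>i\<in>S. t i)"

lemma esym_ES: "esym n k t = ES {1..n} k t" by (simp add: esym_def ES_def)

definition EP :: "nat set \<Rightarrow> (nat \<Rightarrow> rat) \<Rightarrow> rat poly" where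
  "EP J t = (\<Prod>i\<in>J. [:1, t i:])"

definition QP :: "nat set \<Rightarrow> (nat \<Rightarrow> rat) \<Rightarrow> rat poly" where
  "QP J t = (\<Prod>i\<in>J. [:- t i, 1:])"

lemma prod_monom1: "finite X \<Longrightarrow> (\<Prod>i\<in>X. monom (f i) 1) = monom (\<Prod>i\<in>X. f i) (card X)"
  by (induction X rule: finite_induct) (auto simp: mult_monom)

lemma coeff_EP: assumes "finite J" shows "coeff (EP J t) k = ES J k t"
proof -
  have "EP J t = (\<Prod>i\<in>J. monom (t i) 1 + 1)"
    unfolding EP_def by (intro prod.cong refl) (simp add: monom_altdef one_pCons)
  also have "\<dots> = (\<Sum>X\<in>Pow J. (\<Prod>i\<in>X. monom (t i) 1) * (\<Prod>i\<in>J-X. 1))"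
    by (rule prod_add[OF assms])
  also have "\<dots> = (\<Sum>X\<in>Pow J. monom (\<Prod>i\<in>X. t i) (card X))"
  proof (intro sum.cong refl)
    fix X assume "X \<in> Pow J"
    hence "finite X" using finite_subset assms by auto
    thus "(\<Prod>i\<in>X. monom (t i) 1) * (\<Prod>i\<in>J-X. 1) = monom (\<Prod>i\<in>X. t i) (card X)"
      using prod_monom1[of X t] by simp
  qed
  finally have "coeff (EP J t) k = (\<Sum>X\<in>Pow J. if card X = k then (\<Prod>i\<in>X. t i) else 0)"
    by (simp add: coeff_sum coeff_monom)
  also have "\<dots> = (\<Sum>X\<in>{X\<in>Pow J. card X = k}. (\<Prod>i\<in>X. t i))"
    by (rule sum.inter_filter[symmetric]) (simp add: assms)
  also have "{X\<in>Pow J. card X = k} = {S. S \<subseteq> J \<and> card S = k}" by auto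
  finally show ?thesis unfolding ES_def .
qed

lemma coeff_QP: assumes "finite J" "k \<le> card J"
  shows "coeff (QP J t) (card J - k) = (-1)^k * ES J k t"
proof -
  have "QP J t = (\<Prod>i\<in>J. [:- t i:] + monom 1 1)"
    unfolding QP_def by (intro prod.cong refl) (simp add: monom_altdef)
  also have "\<dots> = (\<Sum>X\<in>Pow J. (\<Prod>i\<in>X. [:- t i:]) * (\<Prod>i\<in>J-X. monom 1 1))"
    by (rule prod_add[OF assms(1)])
  also have "\<dots> = (\<Sum>X\<in>Pow J. monom ((-1)^card X * (\<Prod>i\<in>X. t i)) (card J - card X))"
  proof (intro sum.cong refl)
    fix X assume X: "X \<in> Pow J"
    hence fX: "finite X" using finite_subset assms(1) by auto
    have 1: "(\<Prod>i\<in>X. [:- t i:]) = [:(\<Prod>i\<in>X. - t i):]"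
      using fX by (induction X rule: finite_induct) auto
    have "finite (J-X)" using assms(1) by (rule finite_Diff)
    hence "(\<Prod>i\<in>J-X. monom (1::rat) 1) = monom (\<Prod>i\<in>J-X. 1) (card (J-X))"
      by (rule prod_monom1)
    also have "card (J-X) = card J - card X" using X fX by (simp add: card_Diff_subset)
    finally have 2: "(\<Prod>i\<in>J-X. monom (1::rat) 1) = monom 1 (card J - card X)" by simp
    have 3: "(\<Prod>i\<in>X. - t i) = (-1)^card X * (\<Prod>i\<in>X. t i)"
      by (rule prod_uminus)
    have 4: "[:c:] * monom 1 m = monom c m" for c :: rat and m
      by (simp add: smult_monom)
    show "(\<Prod>i\<in>X. [:- t i:]) * (\<Prod>i\<in>J-X. monom 1 1) = monom ((-1)^card X * (\<Prod>i\<in>X. t i)) (card J - card X)"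
      unfolding 1 2 3 4 ..
  qed
  finally have "coeff (QP J t) (card J - k) = (\<Sum>X\<in>Pow J. coeff (monom ((-1)^card X * (\<Prod>i\<in>X. t i)) (card J - card X)) (card J - k))"
    by (simp only: coeff_sum)
  also have "\<dots> = (\<Sum>X\<in>Pow J. if card X = k then (-1)^k * (\<Prod>i\<in>X. t i) else 0)"
  proof (intro sum.cong refl)
    fix X assume "X \<in> Pow J"
    hence "card X \<le> card J" using assms(1) by (simp add: card_mono)
    hence "(card J - card X = card J - k) = (card X = k)" using assms(2) by linarith
    thus "coeff (monom ((-1)^card X * (\<Prod>i\<in>X. t i)) (card J - card X)) (card J - k) = (if card X = k then (-1)^k * (\<Prod>i\<in>X. t i) else 0)"
      by (simp only: coeff_monom) auto
  qed
  also have "\<dots> = (\<Sum>X\<in>{X\<in>Pow J. card X = k}. (-1)^k * (\<Prod>i\<in>X. t i))"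
    by (rule sum.inter_filter[symmetric]) (simp add: assms)
  also have "{X\<in>Pow J. card X = k} = {S. S \<subseteq> J \<and> card S = k}" by auto
  finally show ?thesis unfolding ES_def by (simp only: sum_distrib_left)
qed

lemma ES_0: assumes "finite J" shows "ES J 0 t = 1"
proof -
  have "{S. S \<subseteq> J \<and> card S = 0} = {{}}"
  proof (intro equalityI subsetI)
    fix S assume "S \<in> {S. S \<subseteq> J \<and> card S = 0}"
    then have "S \<subseteq> J" "card S = 0" by auto
    moreover have "finite S" using \<open>S \<subseteq> J\<close> assms by (rule finite_subset)
    ultimately show "S \<in> {{}}" by simp
  qed auto
  thus ?thesis by (simp add: ES_def)
qed

lemma ES_big: "finite J \<Longrightarrow> card J < k \<Longrightarrow> ES J k t = 0"
proof -
  assume "finite J" "card J < k"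
  hence "S \<subseteq> J \<Longrightarrow> card S \<noteq> k" for S using card_mono[of J S] by linarith
  hence "{S. S \<subseteq> J \<and> card S = k} = {}" by blast
  thus ?thesis unfolding ES_def by (metis sum.empty)
qed

lemma ES_rec: assumes "finite J" "i \<in> J"
  shows "ES J (Suc k) t = ES (J - {i}) (Suc k) t + t i * ES (J - {i}) k t"
proof -
  have "EP J t = [:1, t i:] * EP (J - {i}) t"
    unfolding EP_def using assms by (simp add: prod.remove)
  hence "coeff (EP J t) (Suc k) = coeff (EP (J - {i}) t) (Suc k) + t i * coeff (EP (J - {i}) t) k"
    by (simp add: coeff_pCons)
  thus ?thesis using assms by (simp add: coeff_EP)
qed

lemma tele: assumes "finite J" "i \<in> J"
  shows "(\<Sum>r<Suc m. (-1)^r * ES J r t * t i ^ (Suc m - r)) = (-1)^m * t i * ES (J-{i}) m t"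
proof (induction m)
  case 0
  then show ?case using assms by (simp add: ES_0)
next
  case (Suc m)
  have "(\<Sum>r<Suc (Suc m). (-1)^r * ES J r t * t i ^ (Suc (Suc m) - r))
      = (\<Sum>r<Suc m. (-1)^r * ES J r t * t i ^ (Suc (Suc m) - r)) + (-1)^Suc m * ES J (Suc m) t * t i"
    by simp
  also have "(\<Sum>r<Suc m. (-1)^r * ES J r t * t i ^ (Suc (Suc m) - r))
      = t i * (\<Sum>r<Suc m. (-1)^r * ES J r t * t i ^ (Suc m - r))"
    unfolding sum_distrib_left
    by (intro sum.cong refl) (simp add: Suc_diff_le)
  also have "\<dots> = t i * ((-1)^m * t i * ES (J-{i}) m t)" by (simp only: Suc.IH)
  also have "ES J (Suc m) t = ES (J - {i}) (Suc m) t + t i * ES (J - {i}) m t"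
    by (rule ES_rec[OF assms])
  finally have eq: "(\<Sum>r<Suc (Suc m). (-1)^r * ES J r t * t i ^ (Suc (Suc m) - r)) =
     t i * ((-1)^m * t i * ES (J-{i}) m t) + (-1)^Suc m * (ES (J - {i}) (Suc m) t + t i * ES (J - {i}) m t) * t i" .
  show ?case unfolding eq by (simp add: algebra_simps)
qed

lemma sum_ES_remove: assumes "finite J"
  shows "(\<Sum>i\<in>J. t i * ES (J-{i}) m t) = of_nat (Suc m) * ES J (Suc m) t"
proof -
  have "pderiv (EP J t) = (\<Sum>a\<in>J. EP (J - {a}) t * [:t a:])"
    unfolding EP_def pderiv_prod by (simp add: pderiv_pCons)
  hence "coeff (pderiv (EP J t)) m = (\<Sum>a\<in>J. t a * coeff (EP (J - {a}) t) m)"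
    by (simp add: coeff_sum)
  thus ?thesis using assms by (simp add: coeff_pderiv coeff_EP)
qed

definition psum :: "nat \<Rightarrow> nat \<Rightarrow> (nat \<Rightarrow> rat) \<Rightarrow> rat" where
  "psum n m t = (\<Sum>i=1..n. t i ^ m)"

lemma newton:
  "(\<Sum>r<Suc m. (-1)^r * esym n r t * psum n (Suc m - r) t) = (-1)^m * of_nat (Suc m) * esym n (Suc m) t"
proof -
  have "(\<Sum>r<Suc m. (-1)^r * esym n r t * psum n (Suc m - r) t)
     = (\<Sum>i=1..n. (\<Sum>r<Suc m. (-1)^r * ES {1..n} r t * t i ^ (Suc m - r)))"
    unfolding psum_def esym_ES sum_distrib_left by (rule sum.swap)
  also have "\<dots> = (\<Sum>i=1..n. (-1)^m * (t i * ES ({1..n}-{i}) m t))"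
  proof (intro sum.cong refl)
    fix i assume i: "i \<in> {1..n}"
    have "finite {1..n}" by simp
    from tele[OF this i, where m=m and t=t]
    show "(\<Sum>r<Suc m. (-1)^r * ES {1..n} r t * t i ^ (Suc m - r)) = (-1)^m * (t i * ES ({1..n}-{i}) m t)"
      by (simp only: mult.assoc)
  qed
  also have "\<dots> = (-1)^m * of_nat (Suc m) * ES {1..n} (Suc m) t"
    by (simp add: sum_distrib_left[symmetric] sum_ES_remove)
  finally show ?thesis by (simp add: esym_ES)
qed

lemma mpeval_superset: assumes "finite T" "{m. P m \<noteq> 0} \<subseteq> T"
  shows "mpeval n P x = (\<Sum>m\<in>T. P m * (\<Prod>i=1..n. x i ^ m i))"
  unfolding mpeval_def by (rule sum.mono_neutral_left) (use assms in auto)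

lemma mpeval_cong: assumes "\<And>i. i \<in> {1..n} \<Longrightarrow> x i = y i"
  shows "mpeval n P x = mpeval n P y"
  unfolding mpeval_def using assms by (intro sum.cong refl prod.cong) auto

definition repE :: "nat \<Rightarrow> ('a \<Rightarrow> nat \<Rightarrow> rat) \<Rightarrow> ('a \<Rightarrow> rat) \<Rightarrow> bool" where
  "repE n E f \<longleftrightarrow> (\<exists>P. is_mpoly n P \<and> (\<forall>t. f t = mpeval n P (E t)))"

lemma repE_const: "repE n E (\<lambda>t. c)"
proof -
  define P where "P = (\<lambda>m::nat\<Rightarrow>nat. if m = (\<lambda>_. 0) then c else 0)"
  have sub: "{m. P m \<noteq> 0} \<subseteq> {\<lambda>_. 0}" by (auto simp: P_def split: if_splits)
  have "is_mpoly n P" unfolding is_mpoly_def using sub finite_subset by (auto simp: P_def split: if_splits)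
  moreover have "mpeval n P x = c" for x
    by (subst mpeval_superset[OF _ sub]) (auto simp: P_def)
  ultimately show ?thesis unfolding repE_def by metis
qed

lemma repE_var: assumes "k \<in> {1..n}" shows "repE n E (\<lambda>t. E t k)"
proof -
  define d where "d = (\<lambda>i::nat. if i = k then 1 else (0::nat))"
  define P where "P = (\<lambda>m::nat\<Rightarrow>nat. if m = d then 1 else (0::rat))"
  have sub: "{m. P m \<noteq> 0} \<subseteq> {d}" by (auto simp: P_def split: if_splits)
  have "is_mpoly n P" unfolding is_mpoly_def using sub finite_subset assms
    by (auto simp: P_def d_def split: if_splits)
  moreover have "mpeval n P x = x k" for x
  proof -
    have "mpeval n P x = (\<Prod>i=1..n. x i ^ d i)"
      by (subst mpeval_superset[OF _ sub]) (auto simp: P_def)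
    also have "\<dots> = (\<Prod>i=1..n. if i = k then x i else 1)"
      by (intro prod.cong refl) (simp add: d_def)
    also have "\<dots> = x k" using assms by (simp add: prod.delta)
    finally show ?thesis .
  qed
  ultimately show ?thesis unfolding repE_def by metis
qed

lemma repE_add: assumes "repE n E f" "repE n E g" shows "repE n E (\<lambda>t. f t + g t)"
proof -
  obtain P where P: "is_mpoly n P" "\<And>t. f t = mpeval n P (E t)" using assms(1) unfolding repE_def by blast
  obtain Q where Q: "is_mpoly n Q" "\<And>t. g t = mpeval n Q (E t)" using assms(2) unfolding repE_def by blast
  define T where "T = {m. P m \<noteq> 0} \<union> {m. Q m \<noteq> 0}"
  have fT: "finite T" using P(1) Q(1) unfolding T_def is_mpoly_def by auto
  have sub: "{m. P m + Q m \<noteq> 0} \<subseteq> T" "{m. P m \<noteq> 0} \<subseteq> T" "{m. Q m \<noteq> 0} \<subseteq> T" unfolding T_def by auto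
  have "is_mpoly n (\<lambda>m. P m + Q m)"
    unfolding is_mpoly_def
  proof (intro conjI allI impI)
    show "finite {m. P m + Q m \<noteq> 0}" using fT sub(1) finite_subset by blast
  next
    fix m i assume "P m + Q m \<noteq> 0" "i \<notin> {1..n}"
    thus "m i = 0" using P(1) Q(1) unfolding is_mpoly_def by (metis add.right_neutral add_0)
  qed
  moreover have "f t + g t = mpeval n (\<lambda>m. P m + Q m) (E t)" for t
    unfolding P(2) Q(2) mpeval_superset[OF fT sub(1)] mpeval_superset[OF fT sub(2)] mpeval_superset[OF fT sub(3)]
    by (simp add: sum.distrib distrib_right)
  ultimately show ?thesis unfolding repE_def by blast
qed

lemma repE_mult: assumes "repE n E f" "repE n E g" shows "repE n E (\<lambda>t. f t * g t)"
proof -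
  obtain P where P: "is_mpoly n P" "\<And>t. f t = mpeval n P (E t)" using assms(1) unfolding repE_def by blast
  obtain Q where Q: "is_mpoly n Q" "\<And>t. g t = mpeval n Q (E t)" using assms(2) unfolding repE_def by blast
  define SP where "SP = {m. P m \<noteq> 0}"
  define SQ where "SQ = {m. Q m \<noteq> 0}"
  have fin: "finite SP" "finite SQ" using P(1) Q(1) unfolding SP_def SQ_def is_mpoly_def by auto
  define ad where "ad = (\<lambda>(a::nat\<Rightarrow>nat, b::nat\<Rightarrow>nat). (\<lambda>i. a i + b i))"
  define R where "R = (\<lambda>m. \<Sum>ab\<in>{ab\<in>SP \<times> SQ. ad ab = m}. P (fst ab) * Q (snd ab))"
  define T where "T = ad ` (SP \<times> SQ)"
  have fT: "finite T" unfolding T_def using fin by simp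
  have subR: "{m. R m \<noteq> 0} \<subseteq> T"
  proof
    fix m assume "m \<in> {m. R m \<noteq> 0}"
    hence "{ab\<in>SP \<times> SQ. ad ab = m} \<noteq> {}" unfolding R_def by (metis (mono_tags, lifting) mem_Collect_eq sum.empty)
    thus "m \<in> T" unfolding T_def by blast
  qed
  have "is_mpoly n R"
    unfolding is_mpoly_def
  proof (intro conjI allI impI)
    show "finite {m. R m \<noteq> 0}" using fT subR finite_subset by blast
  next
    fix m i assume "R m \<noteq> 0" "i \<notin> {1..n}"
    then obtain a b where "a \<in> SP" "b \<in> SQ" "m = ad (a, b)" using subR unfolding T_def by blast
    thus "m i = 0" using P(1) Q(1) \<open>i \<notin> {1..n}\<close> unfolding is_mpoly_def SP_def SQ_def ad_def by auto
  qed
  moreover have "f t * g t = mpeval n R (E t)" for t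
  proof -
    define X where "X = (\<lambda>m. \<Prod>i=1..n. E t i ^ m i)"
    have Xad: "X (ad ab) = X (fst ab) * X (snd ab)" for ab
      unfolding X_def ad_def by (simp add: case_prod_beta power_add prod.distrib)
    have "mpeval n R (E t) = (\<Sum>m\<in>T. R m * X m)"
      unfolding X_def by (rule mpeval_superset[OF fT subR])
    also have "\<dots> = (\<Sum>m\<in>T. \<Sum>ab\<in>{ab\<in>SP \<times> SQ. ad ab = m}. P (fst ab) * Q (snd ab) * X (ad ab))"
      unfolding R_def sum_distrib_right by (intro sum.cong refl) auto
    also have "\<dots> = (\<Sum>ab\<in>SP \<times> SQ. P (fst ab) * Q (snd ab) * X (ad ab))"
      by (rule sum.group) (use fin in \<open>auto simp: T_def\<close>)
    also have "\<dots> = (\<Sum>ab\<in>SP \<times> SQ. (P (fst ab) * X (fst ab)) * (Q (snd ab) * X (snd ab)))"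
      by (intro sum.cong refl) (simp add: Xad ac_simps)
    also have "\<dots> = (\<Sum>a\<in>SP. P a * X a) * (\<Sum>b\<in>SQ. Q b * X b)"
      by (simp add: sum_product sum.cartesian_product case_prod_beta)
    also have "\<dots> = f t * g t"
      unfolding P(2) Q(2) X_def mpeval_def SP_def SQ_def ..
    finally show ?thesis by simp
  qed
  ultimately show ?thesis unfolding repE_def by blast
qed

lemma repE_sum: "finite A \<Longrightarrow> (\<And>a. a \<in> A \<Longrightarrow> repE n E (f a)) \<Longrightarrow> repE n E (\<lambda>t. \<Sum>a\<in>A. f a t)"
proof (induction A rule: finite_induct)
  case empty
  then show ?case using repE_const[of n E 0] by simp
next
  case (insert x F)
  then show ?case using repE_add[of n E "f x" "\<lambda>t. \<Sum>a\<in>F. f a t"] by simp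
qed

lemma repE_esym: "repE n (\<lambda>t k. esym n k t) (\<lambda>t. esym n r t)"
proof -
  consider "r = 0" | "r \<in> {1..n}" | "r > n" by fastforce
  thus ?thesis
  proof cases
    case 1 thus ?thesis using repE_const[of n _ 1] by (simp add: esym_ES ES_0)
  next
    case 2 thus ?thesis using repE_var[OF 2, of "\<lambda>t k. esym n k t"] by simp
  next
    case 3 thus ?thesis using repE_const[of n _ 0] by (simp add: esym_ES ES_big)
  qed
qed

lemma rep_psum: "repE n (\<lambda>t k. esym n k t) (psum n m)"
proof (induction m rule: less_induct)
  case (less m)
  let ?E = "\<lambda>t k. esym n k t"
  show ?case
  proof (cases m)
    case 0
    then show ?thesis using repE_const[of n ?E "of_nat n"] by (simp add: psum_def)
  next
    case (Suc k)
    have eq: "psum n m t = (-1)^k * of_nat (Suc k) * esym n (Suc k) t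
       - (\<Sum>r\<in>{1..k}. (-1)^r * esym n r t * psum n (Suc k - r) t)" for t
    proof -
      define F where "F = (\<lambda>r. (-1)^r * esym n r t * psum n (Suc k - r) t)"
      have A: "(\<Sum>r<Suc k. F r) = F 0 + (\<Sum>r<k. F (Suc r))" by (rule sum.lessThan_Suc_shift)
      have "{1..k} = {Suc 0..<Suc k}" by auto
      hence B: "(\<Sum>r\<in>{1..k}. F r) = (\<Sum>r<k. F (Suc r))"
        by (simp only: sum.shift_bounds_Suc_ivl atLeast0LessThan)
      have C: "F 0 = psum n (Suc k) t" unfolding F_def by (simp add: esym_ES ES_0)
      have "(\<Sum>r<Suc k. (-1)^r * esym n r t * psum n (Suc k - r) t)
          = psum n (Suc k) t + (\<Sum>r\<in>{1..k}. (-1)^r * esym n r t * psum n (Suc k - r) t)"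
        using A B C unfolding F_def by simp
      thus ?thesis using newton[where m=k and n=n and t=t] Suc by simp
    qed
    have r1: "repE n ?E (\<lambda>t. (-1)^k * of_nat (Suc k) * esym n (Suc k) t)"
      using repE_mult[OF repE_const repE_esym] by simp
    have r2: "repE n ?E (\<lambda>t. \<Sum>r\<in>{1..k}. (-1)^r * esym n r t * psum n (Suc k - r) t)"
    proof (rule repE_sum)
      fix r assume "r \<in> {1..k}"
      hence "Suc k - r < m" using Suc by auto
      hence "repE n ?E (psum n (Suc k - r))" by (rule less)
      thus "repE n ?E (\<lambda>t. (-1)^r * esym n r t * psum n (Suc k - r) t)"
        using repE_mult[OF repE_mult[OF repE_const repE_esym]] by blast
    qed simp
    have "repE n ?E (\<lambda>t. (\<lambda>t. (-1)^k * of_nat (Suc k) * esym n (Suc k) t) t +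
         (\<lambda>t. -1) t * (\<lambda>t. \<Sum>r\<in>{1..k}. (-1)^r * esym n r t * psum n (Suc k - r) t) t)"
      by (rule repE_add[OF r1 repE_mult[OF repE_const r2]])
    thus ?thesis using eq by simp
  qed
qed

lemma existence: "\<exists>P. is_mpoly n P \<and> (\<forall>t. (\<Sum>i=1..n. poly G (t i)) = mpeval n P (\<lambda>k. esym n k t))"
proof -
  have "(\<Sum>i=1..n. poly G (t i)) = (\<Sum>d\<le>degree G. coeff G d * psum n d t)" for t
    unfolding poly_altdef psum_def sum_distrib_left by (rule sum.swap)
  moreover have "repE n (\<lambda>t k. esym n k t) (\<lambda>t. \<Sum>d\<le>degree G. coeff G d * psum n d t)"
    by (rule repE_sum) (auto intro: repE_mult[OF repE_const rep_psum])
  ultimately show ?thesis unfolding repE_def by simp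
qed

lemma ES_cong: assumes "\<And>j. j \<in> J \<Longrightarrow> t j = u j" shows "ES J k t = ES J k u"
  unfolding ES_def using assms by (intro sum.cong refl prod.cong) auto

lemma mpeval_mpderiv: assumes "is_mpoly n P" "k \<in> {1..n}"
  shows "mpeval n (mpderiv k P) c = (\<Sum>m\<in>{m. P m \<noteq> 0}. P m * (of_nat (m k) * c k ^ (m k - 1) * (\<Prod>i\<in>{1..n}-{k}. c i ^ m i)))"
proof -
  define S where "S = {m. P m \<noteq> 0}"
  define S' where "S' = {m\<in>S. 1 \<le> m k}"
  define \<phi> where "\<phi> = (\<lambda>m::nat\<Rightarrow>nat. m(k := m k - 1))"
  have fS: "finite S" using assms(1) unfolding is_mpoly_def S_def by auto
  have fS': "finite S'" using fS unfolding S'_def by auto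
  have sub: "{m. mpderiv k P m \<noteq> 0} \<subseteq> \<phi> ` S'"
  proof
    fix m' assume "m' \<in> {m. mpderiv k P m \<noteq> 0}"
    hence "P (m'(k := m' k + 1)) \<noteq> 0" unfolding mpderiv_def by auto
    hence "m'(k := m' k + 1) \<in> S'" unfolding S'_def S_def by auto
    moreover have "\<phi> (m'(k := m' k + 1)) = m'" unfolding \<phi>_def by auto
    ultimately show "m' \<in> \<phi> ` S'" by (metis image_eqI)
  qed
  have inj: "inj_on \<phi> S'"
  proof (rule inj_onI)
    fix a b assume ab: "a \<in> S'" "b \<in> S'" "\<phi> a = \<phi> b"
    show "a = b"
    proof
      fix i show "a i = b i"
      proof (cases "i = k")
        case True
        have "a k - 1 = b k - 1" using fun_cong[OF ab(3), of k] unfolding \<phi>_def by simp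
        thus ?thesis using ab(1,2) True unfolding S'_def by auto
      next
        case False
        thus ?thesis using fun_cong[OF ab(3), of i] unfolding \<phi>_def by simp
      qed
    qed
  qed
  have "mpeval n (mpderiv k P) c = (\<Sum>m\<in>\<phi> ` S'. mpderiv k P m * (\<Prod>i=1..n. c i ^ m i))"
    by (rule mpeval_superset[OF _ sub]) (use fS' in simp)
  also have "\<dots> = (\<Sum>m\<in>S'. mpderiv k P (\<phi> m) * (\<Prod>i=1..n. c i ^ \<phi> m i))"
    by (rule sum.reindex_cong[OF inj refl]) simp
  also have "\<dots> = (\<Sum>m\<in>S'. P m * (of_nat (m k) * c k ^ (m k - 1) * (\<Prod>i\<in>{1..n}-{k}. c i ^ m i)))"
  proof (rule sum.cong[OF refl])
    fix m assume m: "m \<in> S'"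
    have 1: "(\<phi> m)(k := \<phi> m k + 1) = m" using m unfolding \<phi>_def S'_def by auto
    have "mpderiv k P (\<phi> m) = of_nat (m k) * P m"
      unfolding mpderiv_def 1 using m unfolding \<phi>_def S'_def by auto
    moreover have "(\<Prod>i=1..n. c i ^ \<phi> m i) = c k ^ (m k - 1) * (\<Prod>i\<in>{1..n}-{k}. c i ^ \<phi> m i)"
      using assms(2) by (simp add: prod.remove \<phi>_def)
    moreover have "(\<Prod>i\<in>{1..n}-{k}. c i ^ \<phi> m i) = (\<Prod>i\<in>{1..n}-{k}. c i ^ m i)"
      by (intro prod.cong refl) (simp add: \<phi>_def)
    ultimately show "mpderiv k P (\<phi> m) * (\<Prod>i=1..n. c i ^ \<phi> m i) = P m * (of_nat (m k) * c k ^ (m k - 1) * (\<Prod>i\<in>{1..n}-{k}. c i ^ m i))"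
      by simp
  qed
  also have "\<dots> = (\<Sum>m\<in>S. P m * (of_nat (m k) * c k ^ (m k - 1) * (\<Prod>i\<in>{1..n}-{k}. c i ^ m i)))"
    by (rule sum.mono_neutral_left) (use fS in \<open>auto simp: S'_def\<close>)
  finally show ?thesis unfolding S_def .
qed

lemma pderiv_sum: "pderiv (sum f A) = (\<Sum>a\<in>A. pderiv (f a))"
  by (induction A rule: infinite_finite_induct) (auto simp: pderiv_add)

definition DP :: "nat \<Rightarrow> ((nat \<Rightarrow> nat) \<Rightarrow> rat) \<Rightarrow> (nat \<Rightarrow> rat) \<Rightarrow> (nat \<Rightarrow> rat) \<Rightarrow> rat poly" where
  "DP n P c w = (\<Sum>m\<in>{m. P m \<noteq> 0}. Polynomial.smult (P m) (\<Prod>i=1..n. [:c i, w i:] ^ m i))"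

lemma poly_DP: "poly (DP n P c w) s = mpeval n P (\<lambda>i. c i + s * w i)"
  unfolding DP_def mpeval_def by (simp add: poly_sum poly_prod)

lemma poly_pderiv_prod0: "finite I \<Longrightarrow> poly (pderiv (\<Prod>i\<in>I. [:c i, w i:] ^ m i)) 0 =
   (\<Sum>k\<in>I. w k * (of_nat (m k) * c k ^ (m k - 1) * (\<Prod>i\<in>I-{k}. c i ^ m i)))"
  unfolding pderiv_prod by (simp add: poly_sum poly_prod pderiv_power pderiv_pCons ac_simps)

lemma poly_pderiv_DP: assumes "is_mpoly n P"
  shows "poly (pderiv (DP n P c w)) 0 = (\<Sum>k=1..n. w k * mpeval n (mpderiv k P) c)"
proof -
  have "poly (pderiv (DP n P c w)) 0 = (\<Sum>m\<in>{m. P m \<noteq> 0}. P m *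
      (\<Sum>k=1..n. w k * (of_nat (m k) * c k ^ (m k - 1) * (\<Prod>i\<in>{1..n}-{k}. c i ^ m i))))"
    unfolding DP_def pderiv_sum by (simp add: poly_sum pderiv_smult poly_pderiv_prod0)
  also have "\<dots> = (\<Sum>k=1..n. w k * (\<Sum>m\<in>{m. P m \<noteq> 0}. P m * (of_nat (m k) * c k ^ (m k - 1) * (\<Prod>i\<in>{1..n}-{k}. c i ^ m i))))"
    unfolding sum_distrib_left by (subst sum.swap) (simp add: ac_simps)
  also have "\<dots> = (\<Sum>k=1..n. w k * mpeval n (mpderiv k P) c)"
    by (intro sum.cong refl) (simp add: mpeval_mpderiv[OF assms])
  finally show ?thesis .
qed

lemma esym_shift: assumes "i \<in> {1..n}" "k \<in> {1..n}"
  shows "esym n k (t(i := t i + s)) = esym n k t + s * ES ({1..n}-{i}) (k - 1) t"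
proof -
  obtain k' where k: "k = Suc k'" using assms(2) by (cases k) auto
  have e: "ES ({1..n}-{i}) r (t(i := t i + s)) = ES ({1..n}-{i}) r t" for r
    by (rule ES_cong) auto
  have r1: "ES {1..n} (Suc k') (t(i := t i + s)) = ES ({1..n}-{i}) (Suc k') t + (t i + s) * ES ({1..n}-{i}) k' t"
    using ES_rec[where J="{1..n}" and i=i and t="t(i := t i + s)" and k=k'] assms(1) unfolding e by simp
  have r2: "ES {1..n} (Suc k') t = ES ({1..n}-{i}) (Suc k') t + t i * ES ({1..n}-{i}) k' t"
    using ES_rec[where J="{1..n}" and i=i and t=t and k=k'] assms(1) by simp
  show ?thesis unfolding esym_ES k r1 r2 by (simp add: algebra_simps)
qed

lemma key_system:
  assumes P: "is_mpoly n P" and V: "\<And>t. (\<Sum>l=1..n. poly G (t l)) = mpeval n P (\<lambda>k. esym n k t)"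
    and i: "i \<in> {1..n}"
  shows "(\<Sum>k=1..n. ES ({1..n}-{i}) (k - 1) t * mpeval n (mpderiv k P) (\<lambda>k. esym n k t)) = poly (pderiv G) (t i)"
proof -
  define c where "c = (\<lambda>k. esym n k t)"
  define w where "w = (\<lambda>k. ES ({1..n}-{i}) (k - 1) t)"
  define C where "C = (\<Sum>l\<in>{1..n}-{i}. poly G (t l))"
  define VP where "VP = [:C:] + pcompose G [:t i, 1:]"
  have "poly (DP n P c w) s = poly VP s" for s
  proof -
    have "poly (DP n P c w) s = mpeval n P (\<lambda>k. c k + s * w k)" by (rule poly_DP)
    also have "\<dots> = mpeval n P (\<lambda>k. esym n k (t(i := t i + s)))"
      by (rule mpeval_cong) (simp add: c_def w_def esym_shift[OF i])
    also have "\<dots> = (\<Sum>l=1..n. poly G ((t(i := t i + s)) l))" by (rule V[symmetric])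
    also have "\<dots> = poly G (t i + s) + (\<Sum>l\<in>{1..n}-{i}. poly G ((t(i := t i + s)) l))"
      using i by (simp add: sum.remove)
    also have "(\<Sum>l\<in>{1..n}-{i}. poly G ((t(i := t i + s)) l)) = C"
      unfolding C_def by (intro sum.cong refl) auto
    finally show ?thesis by (simp add: VP_def poly_pcompose add.commute)
  qed
  hence "DP n P c w = VP" using poly_eq_poly_eq_iff by blast
  hence "poly (pderiv (DP n P c w)) 0 = poly (pderiv VP) 0" by simp
  also have "poly (pderiv VP) 0 = poly (pderiv G) (t i)"
    unfolding VP_def by (simp add: pderiv_add pderiv_pcompose pderiv_pCons poly_pcompose)
  finally show ?thesis unfolding poly_pderiv_DP[OF P] c_def w_def .
qed

lemma sum_shift1: "(\<Sum>k=1..n. f k) = (\<Sum>k=0..<n. f (Suc k))"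
proof -
  have "{1..n} = {Suc 0..<Suc n}" by auto
  thus ?thesis by (simp only: sum.shift_bounds_Suc_ivl)
qed

lemma left_inv:
  fixes A B :: "nat \<Rightarrow> nat \<Rightarrow> rat"
  assumes AB: "\<And>i l. i \<in> {1..n} \<Longrightarrow> l \<in> {1..n} \<Longrightarrow> (\<Sum>k=1..n. A i k * B k l) = (if i = l then 1 else 0)"
    and k: "k \<in> {1..n}" and l: "l \<in> {1..n}"
  shows "(\<Sum>i=1..n. B k i * A i l) = (if k = l then 1 else 0)"
proof -
  define Am where "Am = mat n n (\<lambda>(a,b). A (Suc a) (Suc b))"
  define Bm where "Bm = mat n n (\<lambda>(a,b). B (Suc a) (Suc b))"
  have cA: "Am \<in> carrier_mat n n" and cB: "Bm \<in> carrier_mat n n" unfolding Am_def Bm_def by auto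
  have "Am * Bm = 1\<^sub>m n"
  proof (rule eq_matI)
    fix a b assume "a < dim_row (1\<^sub>m n :: rat mat)" "b < dim_col (1\<^sub>m n :: rat mat)"
    hence ab: "a < n" "b < n" by auto
    have "(Am * Bm) $$ (a,b) = row Am a \<bullet> col Bm b"
      by (rule index_mult_mat(1)) (simp_all add: Am_def Bm_def ab)
    also have "\<dots> = (\<Sum>k=0..<n. A (Suc a) (Suc k) * B (Suc k) (Suc b))"
      unfolding scalar_prod_def using ab by (intro sum.cong) (auto simp: Am_def Bm_def)
    also have "\<dots> = (\<Sum>k=1..n. A (Suc a) k * B k (Suc b))" by (rule sum_shift1[symmetric])
    also have "\<dots> = (if a = b then 1 else 0)" using AB[of "Suc a" "Suc b"] ab by simp
    finally show "(Am * Bm) $$ (a,b) = 1\<^sub>m n $$ (a,b)" using ab by simp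
  qed (simp add: Am_def Bm_def)+
  hence BA: "Bm * Am = 1\<^sub>m n" by (rule mat_mult_left_right_inverse[OF cA cB])
  obtain a where a: "k = Suc a" using k by (cases k) auto
  obtain b where b: "l = Suc b" using l by (cases l) auto
  have ab: "a < n" "b < n" using a b k l by auto
  have "(\<Sum>i=1..n. B k i * A i l) = (\<Sum>i=0..<n. B (Suc a) (Suc i) * A (Suc i) (Suc b))"
    unfolding a b by (rule sum_shift1)
  also have "\<dots> = row Bm a \<bullet> col Am b"
    unfolding scalar_prod_def using ab by (intro sum.cong) (auto simp: Am_def Bm_def)
  also have "\<dots> = (Bm * Am) $$ (a,b)"
    by (rule index_mult_mat(1)[symmetric]) (simp_all add: Am_def Bm_def ab)
  also have "\<dots> = (if k = l then 1 else 0)" unfolding BA using a b ab by simp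
  finally show ?thesis .
qed

lemma poly_le_deg: fixes p :: "rat poly" assumes "degree p \<le> N" shows "poly p x = (\<Sum>d\<le>N. coeff p d * x ^ d)"
  unfolding poly_altdef
  by (rule sum.mono_neutral_left) (use assms in \<open>auto simp: coeff_eq_0\<close>)

lemma core:
  assumes i: "i \<in> {1..n}"
  shows "(\<Sum>k=1..n. ES ({1..n}-{i}) (k - 1) t * ((-1)^(k - 1) * x^(n - k))) = (\<Prod>m\<in>{1..n}-{i}. (x - t m))"
proof -
  define J where "J = {1..n}-{i}"
  define N where "N = card J"
  have fJ: "finite J" unfolding J_def by simp
  have nN: "n = Suc N" using i unfolding N_def J_def by (simp add: card_Diff_singleton)
  have deg: "degree (QP J t) \<le> N"
  proof -
    have "degree (QP J t) \<le> sum (degree \<circ> (\<lambda>i. [:- t i, 1:])) J"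
      unfolding QP_def by (rule degree_prod_sum_le[OF fJ])
    also have "\<dots> = N" by (simp add: N_def)
    finally show ?thesis .
  qed
  have "(\<Prod>m\<in>J. (x - t m)) = poly (QP J t) x" unfolding QP_def by (simp add: poly_prod)
  also have "\<dots> = (\<Sum>d\<le>N. coeff (QP J t) d * x ^ d)" by (rule poly_le_deg[OF deg])
  also have "\<dots> = (\<Sum>k=0..N. coeff (QP J t) (N - k) * x ^ (N - k))"
    by (subst sum.atLeastAtMost_rev) (simp add: atMost_atLeast0)
  also have "\<dots> = (\<Sum>k=0..N. (-1)^k * ES J k t * x ^ (N - k))"
    by (intro sum.cong refl) (simp add: N_def coeff_QP[OF fJ])
  also have "\<dots> = (\<Sum>k=1..n. ES J (k - 1) t * ((-1)^(k - 1) * x^(n - k)))"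
  proof -
    have "{1..n} = {Suc 0..Suc N}" by (simp add: nN)
    hence "(\<Sum>k=1..n. ES J (k - 1) t * ((-1)^(k - 1) * x^(n - k))) =
       (\<Sum>k=0..N. ES J (Suc k - 1) t * ((-1)^(Suc k - 1) * x^(n - Suc k)))"
      by (simp only: sum.shift_bounds_cl_Suc_ivl)
    also have "\<dots> = (\<Sum>k=0..N. (-1)^k * ES J k t * x ^ (N - k))"
      by (intro sum.cong refl) (simp add: nN)
    finally show ?thesis by (rule sym)
  qed
  finally show ?thesis unfolding J_def by simp
qed

definition Dd :: "nat \<Rightarrow> (nat \<Rightarrow> rat) \<Rightarrow> nat \<Rightarrow> rat" where
  "Dd n t l = (\<Prod>m\<in>{1..n}-{l}. (t l - t m))"

lemma Dd_nz: assumes inj: "inj_on t {1..n}" and l: "l \<in> {1..n}" shows "Dd n t l \<noteq> 0"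
proof -
  have "t l - t m \<noteq> 0" if "m \<in> {1..n}-{l}" for m
  proof
    assume "t l - t m = 0"
    hence "t l = t m" by simp
    hence "l = m" using inj l that by (meson DiffD1 inj_onD)
    thus False using that by simp
  qed
  thus ?thesis unfolding Dd_def by (simp only: prod_zero_iff finite_Diff finite_atLeastAtMost) blast
qed

lemma core2: assumes "i \<in> {1..n}" "l \<in> {1..n}"
  shows "(\<Sum>k=1..n. ES ({1..n}-{i}) (k - 1) t * ((-1)^(k - 1) * t l^(n - k))) = (if i = l then Dd n t l else 0)"
proof (cases "i = l")
  case True thus ?thesis unfolding core[OF assms(1)] Dd_def by simp
next
  case False
  hence "l \<in> {1..n}-{i}" using assms by simp
  hence "\<exists>m\<in>{1..n}-{i}. t l - t m = 0" by (intro bexI[of _ l]) simp_all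
  hence "(\<Prod>m\<in>{1..n}-{i}. (t l - t m)) = 0" by (intro prod_zero) simp_all
  thus ?thesis unfolding core[OF assms(1)] using False by simp
qed

lemma solve:
  assumes inj: "inj_on t {1..n}"
    and sys: "\<And>i. i \<in> {1..n} \<Longrightarrow> (\<Sum>k=1..n. ES ({1..n}-{i}) (k - 1) t * X k) = g i"
    and k: "k \<in> {1..n}"
  shows "X k = (\<Sum>i=1..n. ((-1)^(k - 1) * t i^(n - k) / Dd n t i) * g i)"
proof -
  define A where "A = (\<lambda>i k. ES ({1..n}-{i}) (k - 1) t)"
  define B where "B = (\<lambda>k l. (-1)^(k - 1) * t l^(n - k) / Dd n t l)"
  have AB: "(\<Sum>k=1..n. A i k * B k l) = (if i = l then 1 else 0)" if "i \<in> {1..n}" "l \<in> {1..n}" for i l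
  proof -
    have "(\<Sum>k=1..n. A i k * B k l) = (\<Sum>k=1..n. ES ({1..n}-{i}) (k - 1) t * ((-1)^(k - 1) * t l^(n - k))) / Dd n t l"
      unfolding A_def B_def sum_divide_distrib by (intro sum.cong refl) simp
    thus ?thesis using core2[OF that, of t] Dd_nz[OF inj that(2)] by simp
  qed
  have "(\<Sum>i=1..n. B k i * g i) = (\<Sum>i=1..n. B k i * (\<Sum>k'=1..n. A i k' * X k'))"
    using sys unfolding A_def by simp
  also have "\<dots> = (\<Sum>i=1..n. \<Sum>k'=1..n. B k i * A i k' * X k')"
    by (simp add: sum_distrib_left mult.assoc)
  also have "\<dots> = (\<Sum>k'=1..n. \<Sum>i=1..n. B k i * A i k' * X k')"
    by (rule sum.swap)
  also have "\<dots> = (\<Sum>k'=1..n. (\<Sum>i=1..n. B k i * A i k') * X k')"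
    by (simp add: sum_distrib_right)
  also have "\<dots> = (\<Sum>k'=1..n. (if k = k' then 1 else 0) * X k')"
  proof (intro sum.cong refl)
    fix k' assume k': "k' \<in> {1..n}"
    show "(\<Sum>i=1..n. B k i * A i k') * X k' = (if k = k' then 1 else 0) * X k'"
      using left_inv[where A=A and B=B, OF AB k k'] by simp
  qed
  also have "\<dots> = (\<Sum>k'=1..n. if k = k' then X k' else 0)"
    by (intro sum.cong refl) simp
  also have "\<dots> = X k" using k by (subst sum.delta') auto
  finally show ?thesis unfolding B_def by simp
qed

lemma mdet_cong: assumes "\<And>k l. k \<in> {1..n} \<Longrightarrow> l \<in> {1..n} \<Longrightarrow> M k l = M' k l"
  shows "mdet n M = mdet n M'"
  unfolding mdet_def
proof (intro sum.cong refl)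
  fix p assume "p \<in> {p. p permutes {1..n}}"
  hence p: "p permutes {1..n}" by simp
  show "of_int (sign p) * (\<Prod>k=1..n. M k (p k)) = of_int (sign p) * (\<Prod>k=1..n. M' k (p k))"
    using assms permutes_in_image[OF p] by (metis (no_types, lifting) prod.cong)
qed

lemma sign_tr: assumes "p permutes (S::nat set)" "finite S" "a \<noteq> b"
  shows "sign (transpose a b \<circ> p) = - sign p" "sign (p \<circ> transpose a b) = - sign p"
proof -
  have pp: "permutation p" using assms(1,2) by (rule permutes_imp_permutation[rotated])
  have pt: "permutation (transpose a b)" by (rule permutation_swap_id)
  show "sign (transpose a b \<circ> p) = - sign p"
    by (simp add: sign_compose[OF pt pp] sign_swap_id assms(3))
  show "sign (p \<circ> transpose a b) = - sign p"
    by (simp add: sign_compose[OF pp pt] sign_swap_id assms(3))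
qed

lemma mdet_col0: assumes ab: "a \<in> {1..n}" "b \<in> {1..n}" "a \<noteq> b" and col: "\<And>k. M k a = M k b"
  shows "mdet n M = 0"
proof -
  define \<tau> where "\<tau> = transpose a b"
  have tp: "\<tau> permutes {1..n}" unfolding \<tau>_def using ab by (simp add: permutes_swap_id)
  have Mt: "M k (\<tau> x) = M k x" for k x
    unfolding \<tau>_def using col by (cases "x = a"; cases "x = b") auto
  have "mdet n M = (\<Sum>p\<in>{p. p permutes {1..n}}. of_int (sign (\<tau> \<circ> p)) * (\<Prod>k=1..n. M k ((\<tau> \<circ> p) k)))"
    unfolding mdet_def by (rule setum_permutations_compose_left[OF tp])
  also have "\<dots> = (\<Sum>p\<in>{p. p permutes {1..n}}. - (of_int (sign p) * (\<Prod>k=1..n. M k (p k))))"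
  proof (intro sum.cong refl)
    fix p assume "p \<in> {p. p permutes {1..n}}"
    hence p: "p permutes {1..n}" by simp
    show "of_int (sign (\<tau> \<circ> p)) * (\<Prod>k=1..n. M k ((\<tau> \<circ> p) k)) = - (of_int (sign p) * (\<Prod>k=1..n. M k (p k)))"
      using sign_tr(1)[OF p _ ab(3)] by (simp add: Mt \<tau>_def[symmetric])
  qed
  also have "\<dots> = - mdet n M" unfolding mdet_def by (simp add: sum_negf)
  finally show ?thesis by simp
qed

lemma mdet_row0: assumes ab: "a \<in> {1..n}" "b \<in> {1..n}" "a \<noteq> b" and row: "\<And>l. M a l = M b l"
  shows "mdet n M = 0"
proof -
  define \<tau> where "\<tau> = transpose a b"
  have tp: "\<tau> permutes {1..n}" unfolding \<tau>_def using ab by (simp add: permutes_swap_id)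
  have Mt: "M (\<tau> k) = M k" for k
    unfolding \<tau>_def using row by (cases "k = a"; cases "k = b") auto
  have "mdet n M = (\<Sum>p\<in>{p. p permutes {1..n}}. of_int (sign (p \<circ> \<tau>)) * (\<Prod>k=1..n. M k ((p \<circ> \<tau>) k)))"
    unfolding mdet_def by (rule sum_permutations_compose_right[OF tp])
  also have "\<dots> = (\<Sum>p\<in>{p. p permutes {1..n}}. - (of_int (sign p) * (\<Prod>k=1..n. M k (p k))))"
  proof (intro sum.cong refl)
    fix p assume "p \<in> {p. p permutes {1..n}}"
    hence p: "p permutes {1..n}" by simp
    have "(\<Prod>k=1..n. M k ((p \<circ> \<tau>) k)) = (\<Prod>k=1..n. M (\<tau> k) (p (\<tau> k)))"
      by (simp add: Mt)
    also have "\<dots> = (\<Prod>k=1..n. M k (p k))"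
      using prod.permute[OF tp, of "\<lambda>k. M k (p k)"] by (simp add: o_def)
    finally show "of_int (sign (p \<circ> \<tau>)) * (\<Prod>k=1..n. M k ((p \<circ> \<tau>) k)) = - (of_int (sign p) * (\<Prod>k=1..n. M k (p k)))"
      using sign_tr(2)[OF p _ ab(3)] by (simp add: \<tau>_def[symmetric])
  qed
  also have "\<dots> = - mdet n M" unfolding mdet_def by (simp add: sum_negf)
  finally show ?thesis by simp
qed

lemma prod_row1: assumes "1 \<le> n"
  shows "(\<Prod>k=1..n. (if k = 1 then h (p k) else M k (p k))) = h (p 1) * (\<Prod>k=Suc 1..n. M k (p k))"
proof -
  have "(\<Prod>k=1..n. (if k = 1 then h (p k) else M k (p k))) = h (p 1) * (\<Prod>k=Suc 1..n. (if k = 1 then h (p k) else M k (p k)))"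
    using assms by (simp add: prod.atLeast_Suc_atMost)
  also have "(\<Prod>k=Suc 1..n. (if k = 1 then h (p k) else M k (p k))) = (\<Prod>k=Suc 1..n. M k (p k))"
    by (intro prod.cong refl) auto
  finally show ?thesis .
qed

lemma mdet_row1_lin: assumes "1 \<le> n" "finite R"
  shows "mdet n (\<lambda>k l. if k = 1 then (\<Sum>r\<in>R. a r * W r l) else M k l)
       = (\<Sum>r\<in>R. a r * mdet n (\<lambda>k l. if k = 1 then W r l else M k l))"
proof -
  have "mdet n (\<lambda>k l. if k = 1 then (\<Sum>r\<in>R. a r * W r l) else M k l)
      = (\<Sum>p | p permutes {1..n}. \<Sum>r\<in>R. a r * (of_int (sign p) * (W r (p 1) * (\<Prod>k=Suc 1..n. M k (p k)))))"
    unfolding mdet_def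
  proof (intro sum.cong refl)
    fix p
    show "of_int (sign p) * (\<Prod>k=1..n. (if k = 1 then (\<Sum>r\<in>R. a r * W r (p k)) else M k (p k)))
       = (\<Sum>r\<in>R. a r * (of_int (sign p) * (W r (p 1) * (\<Prod>k=Suc 1..n. M k (p k)))))"
      unfolding prod_row1[OF assms(1), where h="\<lambda>l. (\<Sum>r\<in>R. a r * W r l)"]
      by (simp add: sum_distrib_left sum_distrib_right ac_simps)
  qed
  also have "\<dots> = (\<Sum>r\<in>R. \<Sum>p | p permutes {1..n}. a r * (of_int (sign p) * (W r (p 1) * (\<Prod>k=Suc 1..n. M k (p k)))))"
    by (rule sum.swap)
  also have "\<dots> = (\<Sum>r\<in>R. a r * (\<Sum>p | p permutes {1..n}. of_int (sign p) * (W r (p 1) * (\<Prod>k=Suc 1..n. M k (p k)))))"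
    by (simp add: sum_distrib_left)
  also have "\<dots> = (\<Sum>r\<in>R. a r * mdet n (\<lambda>k l. if k = 1 then W r l else M k l))"
  proof -
    have inner: "(\<Sum>p | p permutes {1..n}. of_int (sign p) * (W r (p 1) * (\<Prod>k=Suc 1..n. M k (p k))))
        = mdet n (\<lambda>k l. if k = 1 then W r l else M k l)" for r
      unfolding mdet_def prod_row1[OF assms(1), where h="W r"] by (rule refl)
    show ?thesis unfolding inner ..
  qed
  finally show ?thesis .
qed

lemma Lid: assumes inj: "inj_on t {1..n}" and n: "1 \<le> n"
  shows "mdet n (\<lambda>k l. if k = 1 then v l else t l ^ (n - k)) = vandermonde n t * (\<Sum>i=1..n. v i / Dd n t i)"
proof -
  define A where "A = (\<lambda>i r. ES ({1..n}-{i}) (r - 1) t)"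
  define a where "a = (\<lambda>r. \<Sum>i=1..n. v i * ((-1)^(r - 1) * A i r / Dd n t i))"
  have rep: "(\<Sum>r=1..n. a r * t l ^ (n - r)) = v l" if l: "l \<in> {1..n}" for l
  proof -
    have "(\<Sum>r=1..n. a r * t l ^ (n - r)) = (\<Sum>r=1..n. \<Sum>i=1..n. v i / Dd n t i * (A i r * ((-1)^(r - 1) * t l ^ (n - r))))"
      unfolding a_def sum_distrib_right by (intro sum.cong refl) (simp add: ac_simps)
    also have "\<dots> = (\<Sum>i=1..n. v i / Dd n t i * (\<Sum>r=1..n. A i r * ((-1)^(r - 1) * t l ^ (n - r))))"
      unfolding sum_distrib_left by (rule sum.swap)
    also have "\<dots> = (\<Sum>i=1..n. v i / Dd n t i * (if i = l then Dd n t l else 0))"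
    proof (intro sum.cong refl)
      fix i assume i: "i \<in> {1..n}"
      show "v i / Dd n t i * (\<Sum>r=1..n. A i r * ((-1)^(r - 1) * t l ^ (n - r))) = v i / Dd n t i * (if i = l then Dd n t l else 0)"
        unfolding A_def core2[OF i l] ..
    qed
    also have "\<dots> = (\<Sum>i=1..n. if i = l then v l else 0)"
      by (intro sum.cong refl) (simp add: Dd_nz[OF inj l])
    also have "\<dots> = v l" using l by (subst sum.delta) auto
    finally show ?thesis .
  qed
  have "mdet n (\<lambda>k l. if k = 1 then v l else t l ^ (n - k))
      = mdet n (\<lambda>k l. if k = 1 then (\<Sum>r\<in>{1..n}. a r * t l ^ (n - r)) else t l ^ (n - k))"
  proof (rule mdet_cong)
    fix k l assume "k \<in> {1..n}" "l \<in> {1..n}"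
    show "(if k = 1 then v l else t l ^ (n - k)) = (if k = 1 then (\<Sum>r\<in>{1..n}. a r * t l ^ (n - r)) else t l ^ (n - k))"
      using rep[OF \<open>l \<in> {1..n}\<close>] by simp
  qed
  also have "\<dots> = (\<Sum>r\<in>{1..n}. a r * mdet n (\<lambda>k l. if k = 1 then t l ^ (n - r) else t l ^ (n - k)))"
    by (rule mdet_row1_lin[OF n]) simp
  also have "\<dots> = (\<Sum>r\<in>{1..n}. if r = 1 then a r * vandermonde n t else 0)"
  proof (intro sum.cong refl)
    fix r assume r: "r \<in> {1..n}"
    show "a r * mdet n (\<lambda>k l. if k = 1 then t l ^ (n - r) else t l ^ (n - k)) = (if r = 1 then a r * vandermonde n t else 0)"
    proof (cases "r = 1")
      case True
      thus ?thesis unfolding vandermonde_def by (simp add: if_distrib[symmetric] cong: if_cong)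
    next
      case False
      have "mdet n (\<lambda>k l. if k = 1 then t l ^ (n - r) else t l ^ (n - k)) = 0"
        by (rule mdet_row0[of 1 n r]) (use r n False in auto)
      thus ?thesis using False by simp
    qed
  qed
  also have "\<dots> = a 1 * vandermonde n t" using n by (subst sum.delta) auto
  also have "a 1 = (\<Sum>i=1..n. v i / Dd n t i)"
    unfolding a_def A_def by (simp add: ES_0)
  finally show ?thesis by simp
qed

lemma Gfact: assumes "pderiv G = (F - [:poly F 0:]) div [:0, 1:]"
  shows "x * poly (pderiv G) x = poly F x - poly F (0::rat)"
proof -
  define H where "H = F - [:poly F 0:]"
  have "poly H 0 = 0" unfolding H_def by simp
  hence "[:0, 1:] dvd H" using dvd_iff_poly_eq_0[of 0 H] by simp
  hence "[:0, 1:] * (H div [:0, 1:]) = H" by (rule dvd_mult_div_cancel)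
  hence "poly ([:0, 1:] * pderiv G) x = poly H x" using assms unfolding H_def by simp
  thus ?thesis unfolding H_def by simp
qed

theorem proposition4p1:
  fixes n :: nat and F G :: "rat poly"
  assumes "n \<ge> 2"
    and "pderiv G = (F - [:poly F 0:]) div [:0, 1:]"
  defines "V \<equiv> (\<lambda>t. \<Sum>i=1..n. poly G (t i))"
  shows "(\<exists>P. is_mpoly n P \<and> (\<forall>t. V t = mpeval n P (\<lambda>k. esym n k t)))
       \<and> (\<forall>P. is_mpoly n P \<and> (\<forall>t. V t = mpeval n P (\<lambda>k. esym n k t)) \<longrightarrow>
            (\<forall>j \<in> {0..n-2}. \<forall>t.
               qdet F n j t = vandermonde n t *
                 ((-1) ^ (n - j) * mpeval n (mpderiv (n - (j + 1)) P) (\<lambda>k. esym n k t))))"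
proof (intro conjI allI impI ballI)
  show "\<exists>P. is_mpoly n P \<and> (\<forall>t. V t = mpeval n P (\<lambda>k. esym n k t))"
    unfolding V_def by (rule existence)
next
  fix P j t
  assume H: "is_mpoly n P \<and> (\<forall>t. V t = mpeval n P (\<lambda>k. esym n k t))" and j: "j \<in> {0..n-2}"
  have P: "is_mpoly n P" using H by simp
  have V: "\<And>t. (\<Sum>l=1..n. poly G (t l)) = mpeval n P (\<lambda>k. esym n k t)" using H unfolding V_def by simp
  have n1: "1 \<le> n" using assms(1) by simp
  have jn: "j \<le> n - 2" using j by simp
  show "qdet F n j t = vandermonde n t * ((-1) ^ (n - j) * mpeval n (mpderiv (n - (j + 1)) P) (\<lambda>k. esym n k t))"
  proof (cases "inj_on t {1..n}")
    case False
    then obtain a b where ab: "a \<in> {1..n}" "b \<in> {1..n}" "a \<noteq> b" "t a = t b"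
      unfolding inj_on_def by blast
    have "qdet F n j t = 0" unfolding qdet_def
      by (rule mdet_col0[OF ab(1-3)]) (simp add: ab(4))
    moreover have "vandermonde n t = 0" unfolding vandermonde_def
      by (rule mdet_col0[OF ab(1-3)]) (simp add: ab(4))
    ultimately show ?thesis by simp
  next
    case True
    define X where "X = (\<lambda>k. mpeval n (mpderiv k P) (\<lambda>k. esym n k t))"
    define g where "g = (\<lambda>i. poly (pderiv G) (t i))"
    define k' where "k' = n - (j + 1)"
    define \<Delta> where "\<Delta> = vandermonde n t"
    have k'I: "k' \<in> {1..n}" unfolding k'_def using jn assms(1) by auto
    have sys: "(\<Sum>k=1..n. ES ({1..n}-{i}) (k - 1) t * X k) = g i" if "i \<in> {1..n}" for i
      unfolding X_def g_def by (rule key_system[OF P V that])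
    have Xk: "X k' = (\<Sum>i=1..n. ((-1)^(k' - 1) * t i^(n - k') / Dd n t i) * g i)"
      by (rule solve[OF True sys k'I])
    have nk: "n - k' = Suc j" unfolding k'_def using jn assms(1) by auto
    have sgn: "(-1::rat)^(n - j) * (-1)^(k' - 1) = 1"
    proof -
      have "(-1::rat)^(n - j) * (-1)^(k' - 1) = (-1)^((n - j) + (k' - 1))" by (simp add: power_add)
      moreover have "even ((n - j) + (k' - 1))" unfolding k'_def using jn assms(1) by presburger
      ultimately show ?thesis by simp
    qed
    have L1: "qdet F n j t = \<Delta> * (\<Sum>i=1..n. poly F (t i) * t i ^ j / Dd n t i)"
      unfolding qdet_def \<Delta>_def by (rule Lid[OF True n1])
    have L0: "\<Delta> * (\<Sum>i=1..n. t i ^ j / Dd n t i) = 0"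
    proof -
      have "mdet n (\<lambda>k l. if k = 1 then t l ^ j else t l ^ (n - k)) = 0"
        by (rule mdet_row0[of 1 n "n - j"]) (use jn assms(1) in auto)
      thus ?thesis unfolding \<Delta>_def using Lid[OF True n1, of "\<lambda>l. t l ^ j"] by simp
    qed
    have trm: "(-1)^(n - j) * (((-1)^(k' - 1) * t i^(n - k') / Dd n t i) * g i)
        = poly F (t i) * t i ^ j / Dd n t i - poly F 0 * (t i ^ j / Dd n t i)" for i
    proof -
      have "(-1)^(n - j) * (((-1)^(k' - 1) * t i^(n - k') / Dd n t i) * g i)
          = ((-1::rat)^(n - j) * (-1)^(k' - 1)) * (t i ^ j * (t i * g i)) / Dd n t i"
        unfolding nk by (simp add: algebra_simps)
      also have "\<dots> = t i ^ j * (poly F (t i) - poly F 0) / Dd n t i"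
        unfolding sgn g_def Gfact[OF assms(2)] by simp
      finally show ?thesis by (simp add: algebra_simps diff_divide_distrib)
    qed
    have "\<Delta> * ((-1) ^ (n - j) * X k') = \<Delta> * (\<Sum>i=1..n. poly F (t i) * t i ^ j / Dd n t i - poly F 0 * (t i ^ j / Dd n t i))"
      unfolding Xk sum_distrib_left trm ..
    also have "\<dots> = qdet F n j t - poly F 0 * (\<Delta> * (\<Sum>i=1..n. t i ^ j / Dd n t i))"
    proof -
      have "(\<Sum>i=1..n. poly F (t i) * t i ^ j / Dd n t i - poly F 0 * (t i ^ j / Dd n t i))
          = (\<Sum>i=1..n. poly F (t i) * t i ^ j / Dd n t i) - poly F 0 * (\<Sum>i=1..n. t i ^ j / Dd n t i)"
        by (simp only: sum_subtractf sum_distrib_left)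
      thus ?thesis unfolding L1 by (simp only: right_diff_distrib mult.left_commute)
    qed
    also have "\<dots> = qdet F n j t" unfolding L0 by simp
    finally show ?thesis unfolding X_def \<Delta>_def k'_def by simp
  qed
qed

end
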